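(* Let $f\colon 2^{\mathcal{N}}\to\mathbb{R}$ be non-negative and submodular, $k$ a positive integer, $t_s\in[0,1]$, $c=\lceil t_s k\rceil$, $\alpha=1-1/k$, and $Z\subseteq\mathcal{N}$. Assume $\mathcal{N}\setminus Z$ contains at least $2k$ dummy elements (elements $d$ with $f(A\cup\{d\})=f(A)$ for all $A$). Consider the random sets $S_0,\dots,S_k$ produced by the Guided Random Greedy procedure defined below, and let $\mathrm{OPT}\in\arg\max\{f(T):|T|\le k\}$. Then for every integer $1\le i\le c$, \[ \mathbb{E}[f(S_i)]\ \ge\ (1-\alpha^i)\,f(\mathrm{OPT}\setminus Z)-\Big(1-\alpha^i-\tfrac{i}{k}\alpha^{i-1}\Big) f(\mathrm{OPT}\cup Z)+\alpha^i f(S_0), \] and for every integer $c+1\le i\le k$, \[ \mathbb{E}[f(S_i)]\ \ge\ \frac{i-c}{k}\,\alpha^{i-c-1} f(\mathrm{OPT})-\frac{i-c}{k}\big(\alpha^{i-c-1}-\alpha^{i-1}\big) f(\mathrm{OPT}\cup Z). \]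
   Context: Guided Random Greedy: set $S_0=\emptyset$. For $i=1,\dots,c$: let $M_i\subseteq\mathcal{N}\setminus(S_{i-1}\cup Z)$ be a set of size $k$ maximizing $\sum_{u\in M_i}\big(f(S_{i-1}\cup\{u\})-f(S_{i-1})\big)$; pick $u_i$ uniformly at random from $M_i$ and set $S_i=S_{i-1}\cup\{u_i\}$. For $i=c+1,\dots,k$: do the same but with $M_i\subseteq\mathcal{N}\setminus S_{i-1}$ (elements of $Z$ allowed). Submodularity: $f(A\cup\{s\})-f(A)\ge f(B\cup\{s\})-f(B)$ for $A\subseteq B$, $s\notin B$; non-negativity: $f\ge0$. *)

theory Defs
  imports "HOL-Probability.Probability_Mass_Function"
begin

definition nonneg_on :: "'a set \<Rightarrow> ('a set \<Rightarrow> real) \<Rightarrow> bool" where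
  "nonneg_on N f \<longleftrightarrow> (\<forall>A. A \<subseteq> N \<longrightarrow> 0 \<le> f A)"

definition submodular_on :: "'a set \<Rightarrow> ('a set \<Rightarrow> real) \<Rightarrow> bool" where
  "submodular_on N f \<longleftrightarrow>
     (\<forall>A B s. A \<subseteq> B \<and> B \<subseteq> N \<and> s \<in> N \<and> s \<notin> B \<longrightarrow>
        f (A \<union> {s}) - f A \<ge> f (B \<union> {s}) - f B)"

definition dummy_elem :: "'a set \<Rightarrow> ('a set \<Rightarrow> real) \<Rightarrow> 'a \<Rightarrow> bool" where
  "dummy_elem N f d \<longleftrightarrow> d \<in> N \<and> (\<forall>A. A \<subseteq> N \<longrightarrow> f (A \<union> {d}) = f A)"

definition marg :: "('a set \<Rightarrow> real) \<Rightarrow> 'a set \<Rightarrow> 'a \<Rightarrow> real" where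
  "marg f S u = f (S \<union> {u}) - f S"

definition is_max_block :: "('a set \<Rightarrow> real) \<Rightarrow> nat \<Rightarrow> 'a set \<Rightarrow> 'a set \<Rightarrow> 'a set \<Rightarrow> bool" where
  "is_max_block f k S Y M \<longleftrightarrow>
     M \<subseteq> Y \<and> card M = k \<and>
     (\<forall>M'. M' \<subseteq> Y \<and> card M' = k \<longrightarrow> sum (marg f S) M' \<le> sum (marg f S) M)"

definition valid_grg_rule ::
  "'a set \<Rightarrow> ('a set \<Rightarrow> real) \<Rightarrow> nat \<Rightarrow> nat \<Rightarrow> 'a set \<Rightarrow> (nat \<Rightarrow> 'a set \<Rightarrow> 'a set) \<Rightarrow> bool" where
  "valid_grg_rule N f k c Z sel \<longleftrightarrow>
     (\<forall>i S. 1 \<le> i \<and> i \<le> k \<and> S \<subseteq> N \<and> card S = i - 1 \<longrightarrow>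
        is_max_block f k S (if i \<le> c then N - (S \<union> Z) else N - S) (sel i S))"

fun grg :: "(nat \<Rightarrow> 'a set \<Rightarrow> 'a set) \<Rightarrow> nat \<Rightarrow> 'a set pmf" where
  "grg sel 0 = return_pmf {}"
| "grg sel (Suc i) =
     bind_pmf (grg sel i) (\<lambda>S. map_pmf (\<lambda>u. S \<union> {u}) (pmf_of_set (sel (Suc i) S)))"

end

theory Submission
  imports Defs
begin


lemma marg_sum_ge:
  assumes sub: "submodular_on N f" and "finite M" "M \<subseteq> N" "B \<subseteq> N"
  shows "f (B \<union> M) - f B \<le> sum (marg f B) M"
  using assms(2,3)
proof (induction M rule: finite_induct)
  case empty then show ?case by simp
next
  case (insert x M)
  have IH: "f (B \<union> M) - f B \<le> sum (marg f B) M" using insert by auto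
  have "f (B \<union> insert x M) - f (B \<union> M) \<le> marg f B x"
  proof (cases "x \<in> B")
    case True
    then have "B \<union> insert x M = B \<union> M" "B \<union> {x} = B" by auto
    then show ?thesis by (simp add: marg_def)
  next
    case False
    then have "x \<notin> B \<union> M" using insert by auto
    moreover have "B \<union> M \<subseteq> N" "x \<in> N" using insert assms(4) by auto
    ultimately have "f (B \<union> {x}) - f B \<ge> f ((B \<union> M) \<union> {x}) - f (B \<union> M)"
      using sub unfolding submodular_on_def by blast
    moreover have "B \<union> insert x M = (B \<union> M) \<union> {x}" by auto
    ultimately show ?thesis by (simp add: marg_def)
  qed
  then show ?case using IH insert by simp
qed

lemma set_submod:
  assumes sub: "submodular_on N f" and "A \<subseteq> C" "C \<subseteq> N" "finite X" "X \<subseteq> N"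
    and "X \<inter> (C - A) = {}"
  shows "f (C \<union> X) - f C \<le> f (A \<union> X) - f A"
  using assms(4,5,6)
proof (induction X rule: finite_induct)
  case empty then show ?case by simp
next
  case (insert x X)
  have IH: "f (C \<union> X) - f C \<le> f (A \<union> X) - f A" using insert by auto
  have "f (C \<union> insert x X) - f (C \<union> X) \<le> f (A \<union> insert x X) - f (A \<union> X)"
  proof (cases "x \<in> C")
    case True
    then have "x \<in> A" using insert by auto
    then have "C \<union> insert x X = C \<union> X" "A \<union> insert x X = A \<union> X" using assms(2) by auto
    then show ?thesis by simp
  next
    case False
    then have "x \<notin> C \<union> X" using insert by auto
    moreover have "A \<union> X \<subseteq> C \<union> X" "C \<union> X \<subseteq> N" "x \<in> N" using insert assms(2,3) by auto
    ultimately have "f ((A \<union> X) \<union> {x}) - f (A \<union> X) \<ge> f ((C \<union> X) \<union> {x}) - f (C \<union> X)"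
      using sub unfolding submodular_on_def by blast
    moreover have "C \<union> insert x X = (C \<union> X) \<union> {x}" "A \<union> insert x X = (A \<union> X) \<union> {x}" by auto
    ultimately show ?thesis by simp
  qed
  then show ?case using IH by simp
qed

lemma expectation_sum:
  assumes "finite (set_pmf p)"
  shows "measure_pmf.expectation p (g :: _ \<Rightarrow> real) = (\<Sum>a\<in>set_pmf p. pmf p a * g a)"
  using assms by (subst integral_measure_pmf[of "set_pmf p"]) auto

lemma expectation_mono:
  assumes "finite (set_pmf p)" "\<And>a. a \<in> set_pmf p \<Longrightarrow> (g :: _ \<Rightarrow> real) a \<le> h a"
  shows "measure_pmf.expectation p g \<le> measure_pmf.expectation p h"
  using assms by (simp add: expectation_sum sum_mono mult_left_mono)

lemma expectation_lin:
  assumes "finite (set_pmf p)"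
  shows "measure_pmf.expectation p (\<lambda>x. a * (g :: _ \<Rightarrow> real) x + b * h x + c)
     = a * measure_pmf.expectation p g + b * measure_pmf.expectation p h + c"
proof -
  have "integrable p g" "integrable p h" using assms integrable_measure_pmf_finite by blast+
  then show ?thesis by simp
qed



locale grg_ctx =
  fixes N Z :: "'a set" and f :: "'a set \<Rightarrow> real" and k c :: nat and sel :: "nat \<Rightarrow> 'a set \<Rightarrow> 'a set"
    and D :: "'a set"
  assumes finN: "finite N" and nonneg: "nonneg_on N f" and sub: "submodular_on N f"
    and kpos: "0 < k" and ck: "c \<le> k" and ZN: "Z \<subseteq> N"
    and DN: "D \<subseteq> N - Z" and cardD: "card D \<ge> 2 * k" and dum: "\<forall>d\<in>D. dummy_elem N f d"
    and valid: "valid_grg_rule N f k c Z sel"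
begin

lemma sel_props:
  assumes "1 \<le> i" "i \<le> k" "S \<subseteq> N" "card S = i - 1"
  shows "sel i S \<subseteq> N - S" "card (sel i S) = k" "finite (sel i S)" "sel i S \<noteq> {}"
    "i \<le> c \<Longrightarrow> sel i S \<inter> Z = {}"
    "\<And>M'. M' \<subseteq> (if i \<le> c then N - (S \<union> Z) else N - S) \<Longrightarrow> card M' = k \<Longrightarrow>
        sum (marg f S) M' \<le> sum (marg f S) (sel i S)"
proof -
  have mb: "is_max_block f k S (if i \<le> c then N - (S \<union> Z) else N - S) (sel i S)"
    using valid assms unfolding valid_grg_rule_def by blast
  then show 1: "sel i S \<subseteq> N - S" "card (sel i S) = k"
    unfolding is_max_block_def by (auto split: if_splits)
  then show 2: "finite (sel i S)" using finN finite_subset by blast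
  show "sel i S \<noteq> {}" using 1 kpos by auto
  show "i \<le> c \<Longrightarrow> sel i S \<inter> Z = {}" using mb unfolding is_max_block_def by auto
  show "\<And>M'. M' \<subseteq> (if i \<le> c then N - (S \<union> Z) else N - S) \<Longrightarrow> card M' = k \<Longrightarrow>
        sum (marg f S) M' \<le> sum (marg f S) (sel i S)"
    using mb unfolding is_max_block_def by blast
qed

lemma supp:
  "i \<le> k \<Longrightarrow> S \<in> set_pmf (grg sel i) \<Longrightarrow> S \<subseteq> N \<and> card S = i \<and> (i \<le> c \<longrightarrow> S \<inter> Z = {})"
proof (induction i arbitrary: S)
  case 0 then show ?case by simp
next
  case (Suc i)
  from Suc.prems(2) obtain S0 u where S0: "S0 \<in> set_pmf (grg sel i)"
    and u0: "u \<in> set_pmf (pmf_of_set (sel (Suc i) S0))" and S: "S = insert u S0"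
    by auto
  have IH: "S0 \<subseteq> N" "card S0 = i" "i \<le> c \<longrightarrow> S0 \<inter> Z = {}"
    using Suc.IH[OF _ S0] Suc.prems(1) by auto
  note sp = sel_props[of "Suc i" S0, simplified, OF Suc.prems(1) IH(1,2)]
  have u: "u \<in> sel (Suc i) S0" using u0 sp by simp
  have fin0: "finite S0" using IH(1) finN finite_subset by blast
  have "u \<in> N" "u \<notin> S0" using u sp by auto
  moreover have "Suc i \<le> c \<Longrightarrow> u \<notin> Z" using u sp by auto
  ultimately show ?case using S IH fin0 by auto
qed

lemma fin_supp: "i \<le> k \<Longrightarrow> finite (set_pmf (grg sel i))"
proof -
  assume "i \<le> k"
  then have "set_pmf (grg sel i) \<subseteq> Pow N" using supp by blast
  then show ?thesis using finN finite_subset by blast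
qed

lemma step:
  assumes "Suc i \<le> k"
  shows "measure_pmf.expectation (grg sel (Suc i)) h =
    measure_pmf.expectation (grg sel i) (\<lambda>S. (\<Sum>u\<in>sel (Suc i) S. h (S \<union> {u})) / real k)"
proof -
  let ?A = "set_pmf (grg sel i)"
  have finA: "finite ?A" using fin_supp assms by simp
  have sp: "finite (sel (Suc i) S)" "sel (Suc i) S \<noteq> {}" "card (sel (Suc i) S) = k" if "S \<in> ?A" for S
    using sel_props[of "Suc i" S] supp[of i S] that assms by auto
  have "measure_pmf.expectation (grg sel (Suc i)) h =
     (\<Sum>a\<in>?A. pmf (grg sel i) a *\<^sub>R measure_pmf.expectation
         (map_pmf (\<lambda>u. a \<union> {u}) (pmf_of_set (sel (Suc i) a))) h)"
    using sp finA by (simp only: grg.simps, subst pmf_expectation_bind[of ?A]) auto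
  also have "\<dots> = (\<Sum>a\<in>?A. pmf (grg sel i) a * ((\<Sum>u\<in>sel (Suc i) a. h (a \<union> {u})) / real k))"
    using sp by (intro sum.cong refl) (simp add: integral_pmf_of_set)
  also have "\<dots> = measure_pmf.expectation (grg sel i) (\<lambda>S. (\<Sum>u\<in>sel (Suc i) S. h (S \<union> {u})) / real k)"
    using finA by (simp add: expectation_sum sum_divide_distrib)
  finally show ?thesis .
qed

lemma sum_f_ins:
  assumes "finite M"
  shows "(\<Sum>u\<in>M. f (B \<union> {u})) = real (card M) * f B + sum (marg f B) M"
  using assms by (simp add: marg_def sum.distrib sum_subtractf)

lemma padding:
  assumes "S \<subseteq> N" "card S < k" "T \<subseteq> N" "card T \<le> k" "T - S \<subseteq> Y" "D - S \<subseteq> Y"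
  shows "\<exists>M'. M' \<subseteq> Y \<and> card M' = k \<and> f (S \<union> T) - f S \<le> sum (marg f S) M'"
proof -
  have finD: "finite D" using DN finN finite_subset by blast
  have finS: "finite S" using assms(1) finN finite_subset by blast
  have finT: "finite (T - S)" using assms(3) finN finite_subset by blast
  have cTS: "card (T - S) \<le> k" using assms(4) finT
    by (meson Diff_subset assms(3) card_mono finN finite_subset le_trans)
  have "card D - card S \<le> card (D - S)" using diff_card_le_card_Diff finS by blast
  then have c1: "card (D - S) \<ge> k" using cardD assms(2) by linarith
  have "card (D - S) - card (T - S) \<le> card ((D - S) - (T - S))" using diff_card_le_card_Diff finT by blast
  then have "k - card (T - S) \<le> card ((D - S) - (T - S))" using c1 by linarith
  then obtain X where X: "X \<subseteq> (D - S) - (T - S)" "card X = k - card (T - S)" "finite X"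
    by (meson obtain_subset_with_card_n)
  define M' where "M' = (T - S) \<union> X"
  have disj: "(T - S) \<inter> X = {}" using X by auto
  have cM: "card M' = k" unfolding M'_def using card_Un_disjoint[OF finT X(3) disj] X cTS by simp
  have "M' \<subseteq> Y" unfolding M'_def using X assms by auto
  have X0: "sum (marg f S) X = 0"
  proof (rule sum.neutral, intro ballI)
    fix d assume "d \<in> X"
    then have "d \<in> D" using X by auto
    then show "marg f S d = 0" using dum assms(1) unfolding dummy_elem_def marg_def by auto
  qed
  have "sum (marg f S) M' = sum (marg f S) (T - S)"
    unfolding M'_def by (simp add: sum.union_disjoint[OF finT X(3) disj] X0)
  moreover have "f (S \<union> (T - S)) - f S \<le> sum (marg f S) (T - S)"
    using marg_sum_ge[OF sub finT _ assms(1)] assms(3) by auto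
  moreover have "S \<union> (T - S) = S \<union> T" by auto
  ultimately show ?thesis using \<open>M' \<subseteq> Y\<close> cM by auto
qed

lemma gain:
  assumes "Suc i \<le> k" "T \<subseteq> N" "card T \<le> k" "Suc i \<le> c \<longrightarrow> T \<inter> Z = {}"
  shows "(1 - 1 / real k) * measure_pmf.expectation (grg sel i) f
     + (1 / real k) * measure_pmf.expectation (grg sel i) (\<lambda>S. f (S \<union> T))
     \<le> measure_pmf.expectation (grg sel (Suc i)) f"
proof -
  have finA: "finite (set_pmf (grg sel i))" using fin_supp assms by simp
  have pw: "(1 - 1 / real k) * f S + (1 / real k) * f (S \<union> T) + 0
      \<le> (\<Sum>u\<in>sel (Suc i) S. f (S \<union> {u})) / real k" if "S \<in> set_pmf (grg sel i)" for S
  proof -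
    have Sp: "S \<subseteq> N" "card S = i" "i \<le> c \<longrightarrow> S \<inter> Z = {}" using supp[OF _ that] assms by auto
    note sp = sel_props[of "Suc i" S, simplified, OF assms(1) Sp(1,2)]
    let ?Y = "if Suc i \<le> c then N - (S \<union> Z) else N - S"
    have "T - S \<subseteq> ?Y" "D - S \<subseteq> ?Y" using assms(2,4) DN by auto
    then obtain M' where M': "M' \<subseteq> ?Y" "card M' = k" "f (S \<union> T) - f S \<le> sum (marg f S) M'"
      using padding[OF Sp(1) _ assms(2,3)] Sp(2) assms(1) by (metis Suc_le_lessD)
    have "sum (marg f S) M' \<le> sum (marg f S) (sel (Suc i) S)" using sp(6) M'(1,2) by blast
    then have "(\<Sum>u\<in>sel (Suc i) S. f (S \<union> {u})) \<ge> real k * f S + (f (S \<union> T) - f S)"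
      using sum_f_ins[OF sp(3), of S] sp(2) M'(3) by simp
    then have "(real k * f S + (f (S \<union> T) - f S)) / real k \<le> (\<Sum>u\<in>sel (Suc i) S. f (S \<union> {u})) / real k"
      by (intro divide_right_mono) auto
    moreover have "(real k * f S + (f (S \<union> T) - f S)) / real k = (1 - 1 / real k) * f S + (1 / real k) * f (S \<union> T) + 0"
      using kpos by (simp add: field_simps)
    ultimately show ?thesis by simp
  qed
  have "(1 - 1 / real k) * measure_pmf.expectation (grg sel i) f
     + (1 / real k) * measure_pmf.expectation (grg sel i) (\<lambda>S. f (S \<union> T)) + 0
     = measure_pmf.expectation (grg sel i) (\<lambda>S. (1 - 1 / real k) * f S + (1 / real k) * f (S \<union> T) + 0)"
    using expectation_lin[OF finA] by metis
  also have "\<dots> \<le> measure_pmf.expectation (grg sel i) (\<lambda>S. (\<Sum>u\<in>sel (Suc i) S. f (S \<union> {u})) / real k)"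
    by (rule expectation_mono[OF finA pw])
  also have "\<dots> = measure_pmf.expectation (grg sel (Suc i)) f" using step[OF assms(1)] by simp
  finally show ?thesis by simp
qed

lemma decay:
  assumes "Suc i \<le> k" "A \<subseteq> N"
  shows "(1 - 1 / real k) * measure_pmf.expectation (grg sel i) (\<lambda>S. f (S \<union> A))
     \<le> measure_pmf.expectation (grg sel (Suc i)) (\<lambda>S. f (S \<union> A))"
proof -
  have finA: "finite (set_pmf (grg sel i))" using fin_supp assms by simp
  have pw: "(1 - 1 / real k) * f (S \<union> A) + 0 * f (S \<union> A) + 0
      \<le> (\<Sum>u\<in>sel (Suc i) S. f (S \<union> {u} \<union> A)) / real k" if "S \<in> set_pmf (grg sel i)" for S
  proof -
    have Sp: "S \<subseteq> N" "card S = i" using supp[OF _ that] assms by auto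
    note sp = sel_props[of "Suc i" S, simplified, OF assms(1) Sp(1,2)]
    let ?B = "S \<union> A"
    have B: "?B \<subseteq> N" using Sp assms by auto
    have eq: "(\<Sum>u\<in>sel (Suc i) S. f (S \<union> {u} \<union> A)) = (\<Sum>u\<in>sel (Suc i) S. f (?B \<union> {u}))"
      by (intro sum.cong refl) (metis Un_commute Un_left_commute)
    have "f (?B \<union> sel (Suc i) S) - f ?B \<le> sum (marg f ?B) (sel (Suc i) S)"
      using marg_sum_ge[OF sub sp(3) _ B] sp(1) by auto
    moreover have "?B \<union> sel (Suc i) S \<subseteq> N" using B sp(1) by auto
    then have "f (?B \<union> sel (Suc i) S) \<ge> 0" using nonneg unfolding nonneg_on_def by blast
    ultimately have "(\<Sum>u\<in>sel (Suc i) S. f (S \<union> {u} \<union> A)) \<ge> real k * f ?B - f ?B"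
      using sum_f_ins[OF sp(3), of ?B] sp(2) eq by simp
    then have "(real k * f ?B - f ?B) / real k \<le> (\<Sum>u\<in>sel (Suc i) S. f (S \<union> {u} \<union> A)) / real k"
      by (intro divide_right_mono) auto
    moreover have "(real k * f ?B - f ?B) / real k = (1 - 1 / real k) * f ?B + 0 * f ?B + 0"
      using kpos by (simp add: field_simps)
    ultimately show ?thesis by simp
  qed
  have "(1 - 1 / real k) * measure_pmf.expectation (grg sel i) (\<lambda>S. f (S \<union> A))
     + 0 * measure_pmf.expectation (grg sel i) (\<lambda>S. f (S \<union> A)) + 0
     = measure_pmf.expectation (grg sel i) (\<lambda>S. (1 - 1 / real k) * f (S \<union> A) + 0 * f (S \<union> A) + 0)"
    using expectation_lin[OF finA] by metis
  also have "\<dots> \<le> measure_pmf.expectation (grg sel i) (\<lambda>S. (\<Sum>u\<in>sel (Suc i) S. f (S \<union> {u} \<union> A)) / real k)"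
    by (rule expectation_mono[OF finA pw])
  also have "\<dots> = measure_pmf.expectation (grg sel (Suc i)) (\<lambda>S. f (S \<union> A))" using step[OF assms(1)] by simp
  finally show ?thesis by simp
qed

end


lemma alg1:
  fixes \<alpha> a b fO fU f0 kk i :: real
  assumes "\<alpha> = 1 - 1/kk" "kk > 0" "\<alpha>*(i*b) = i*a"
  shows "\<alpha>*((1-a)*fO - (1-a - i/kk*b)*fU + a*f0) + (1/kk)*(fO + a*fU - fU)
       = (1 - \<alpha>*a)*fO - (1 - \<alpha>*a - (i+1)/kk*a)*fU + (\<alpha>*a)*f0"
proof -
  have e: "\<alpha>*(i/kk*b) = i*a/kk" using assms(3) by (simp add: field_simps)
  have "\<alpha>*((1-a)*fO - (1-a - i/kk*b)*fU + a*f0) + (1/kk)*(fO + a*fU - fU)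
      = (\<alpha> + 1/kk - \<alpha>*a)*fO - (\<alpha> - \<alpha>*a - \<alpha>*(i/kk*b) + 1/kk - a/kk)*fU + (\<alpha>*a)*f0"
    by (simp add: algebra_simps)
  also have "\<dots> = (1 - \<alpha>*a)*fO - (1 - \<alpha>*a - i*a/kk - a/kk)*fU + (\<alpha>*a)*f0"
    using e assms(1) by simp
  also have "\<dots> = (1 - \<alpha>*a)*fO - (1 - \<alpha>*a - (i+1)/kk*a)*fU + (\<alpha>*a)*f0"
  proof -
    have h: "(i+1)/kk*a = i*a/kk + a/kk" by (simp add: add_divide_distrib ring_distribs)
    show ?thesis unfolding h by (simp add: algebra_simps)
  qed
  finally show ?thesis .
qed

lemma alg2:
  fixes \<alpha> a b X kk m :: real
  assumes "\<alpha>*(m*b) = m*a"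
  shows "\<alpha>*(m/kk*b*X) + (1/kk)*(a*X) = (m+1)/kk*a*X"
proof -
  have "\<alpha>*(m/kk*b*X) = (\<alpha>*(m*b))*X/kk" by simp
  also have "\<dots> = m*a*X/kk" by (simp only: assms)
  finally have e: "\<alpha>*(m/kk*b*X) = m*a*X/kk" .
  have h: "(m+1)/kk*a*X = m*a*X/kk + a*X/kk" by (simp add: add_divide_distrib ring_distribs)
  show ?thesis unfolding e h by simp
qed

context grg_ctx
begin

lemma alpha_nonneg: "0 \<le> 1 - 1 / real k"
  using kpos by (simp add: field_simps)

lemma decay_iter:
  assumes "A \<subseteq> N" "j + m \<le> k"
  shows "(1 - 1 / real k) ^ m * measure_pmf.expectation (grg sel j) (\<lambda>S. f (S \<union> A))
     \<le> measure_pmf.expectation (grg sel (j + m)) (\<lambda>S. f (S \<union> A))"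
  using assms(2)
proof (induction m)
  case 0 then show ?case by simp
next
  case (Suc m)
  have "(1 - 1 / real k) ^ Suc m * measure_pmf.expectation (grg sel j) (\<lambda>S. f (S \<union> A))
      = (1 - 1 / real k) * ((1 - 1 / real k) ^ m * measure_pmf.expectation (grg sel j) (\<lambda>S. f (S \<union> A)))"
    by simp
  also have "\<dots> \<le> (1 - 1 / real k) * measure_pmf.expectation (grg sel (j + m)) (\<lambda>S. f (S \<union> A))"
    using Suc by (intro mult_left_mono alpha_nonneg) auto
  also have "\<dots> \<le> measure_pmf.expectation (grg sel (Suc (j + m))) (\<lambda>S. f (S \<union> A))"
    using decay[of "j + m" A] Suc.prems assms(1) by simp
  finally show ?case by simp
qed

lemma decay0:
  assumes "A \<subseteq> N" "m \<le> k"
  shows "(1 - 1 / real k) ^ m * f A \<le> measure_pmf.expectation (grg sel m) (\<lambda>S. f (S \<union> A))"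
  using decay_iter[OF assms(1), of 0 m] assms(2) by simp

lemma compare:
  assumes "i \<le> k" "A \<subseteq> C" "C \<subseteq> N" "\<And>S. S \<in> set_pmf (grg sel i) \<Longrightarrow> S \<inter> (C - A) = {}"
  shows "f A + (1 - 1 / real k) ^ i * f C - f C \<le> measure_pmf.expectation (grg sel i) (\<lambda>S. f (S \<union> A))"
proof -
  have finA: "finite (set_pmf (grg sel i))" using fin_supp assms by simp
  have "f A + (1 - 1 / real k) ^ i * f C - f C \<le> f A + measure_pmf.expectation (grg sel i) (\<lambda>S. f (S \<union> C)) - f C"
    using decay0[of C i] assms by simp
  also have "\<dots> = measure_pmf.expectation (grg sel i) (\<lambda>S. 1 * f (S \<union> C) + 0 * f (S \<union> C) + (f A - f C))"
    using expectation_lin[OF finA, of 1 "\<lambda>S. f (S \<union> C)" 0 "\<lambda>S. f (S \<union> C)" "f A - f C"] by simp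
  also have "\<dots> \<le> measure_pmf.expectation (grg sel i) (\<lambda>S. f (S \<union> A))"
  proof (rule expectation_mono[OF finA])
    fix S assume S: "S \<in> set_pmf (grg sel i)"
    have "S \<subseteq> N" using supp[OF assms(1) S] by auto
    then have fS: "finite S" using finN finite_subset by blast
    have "f (C \<union> S) - f C \<le> f (A \<union> S) - f A"
      using set_submod[OF sub assms(2,3) fS \<open>S \<subseteq> N\<close> assms(4)[OF S]] .
    then show "1 * f (S \<union> C) + 0 * f (S \<union> C) + (f A - f C) \<le> f (S \<union> A)"
      by (simp add: Un_commute)
  qed
  finally show ?thesis .
qed

lemma pow_pred: "(x::real) * (real i * x ^ (i - 1)) = real i * x ^ i"
  by (cases i) auto

lemma phase1:
  assumes OPT: "OPT \<subseteq> N" "card OPT \<le> k"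
  shows "i \<le> c \<Longrightarrow> measure_pmf.expectation (grg sel i) f \<ge>
         (1 - (1 - 1 / real k) ^ i) * f (OPT - Z)
         - (1 - (1 - 1 / real k) ^ i - real i / real k * (1 - 1 / real k) ^ (i - 1)) * f (OPT \<union> Z)
         + (1 - 1 / real k) ^ i * f {}"
proof (induction i)
  case 0 then show ?case by simp
next
  case (Suc i)
  let ?\<alpha> = "1 - 1 / real k" and ?O = "OPT - Z" and ?U = "OPT \<union> Z"
  let ?E = "\<lambda>i g. measure_pmf.expectation (grg sel i) g"
  have ik: "Suc i \<le> k" using Suc.prems ck by simp
  have finO: "finite OPT" using OPT finN finite_subset by blast
  have cO: "card ?O \<le> k" using card_mono[OF finO, of ?O] OPT by auto
  have G: "?\<alpha> * ?E i f + (1 / real k) * ?E i (\<lambda>S. f (S \<union> ?O)) \<le> ?E (Suc i) f"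
    using gain[OF ik _ cO] OPT by auto
  have C: "f ?O + ?\<alpha> ^ i * f ?U - f ?U \<le> ?E i (\<lambda>S. f (S \<union> ?O))"
  proof (rule compare)
    show "i \<le> k" "?O \<subseteq> ?U" "?U \<subseteq> N" using ik OPT ZN by auto
    fix S assume "S \<in> set_pmf (grg sel i)"
    then have "S \<inter> Z = {}" using supp[of i S] ik Suc.prems by auto
    then show "S \<inter> (?U - ?O) = {}" by auto
  qed
  have IH: "(1 - ?\<alpha> ^ i) * f ?O - (1 - ?\<alpha> ^ i - real i / real k * ?\<alpha> ^ (i - 1)) * f ?U + ?\<alpha> ^ i * f {}
      \<le> ?E i f" using Suc by simp
  have "(1 - ?\<alpha> ^ Suc i) * f ?O - (1 - ?\<alpha> ^ Suc i - real (Suc i) / real k * ?\<alpha> ^ (Suc i - 1)) * f ?U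
       + ?\<alpha> ^ Suc i * f {}
      = ?\<alpha> * ((1 - ?\<alpha> ^ i) * f ?O - (1 - ?\<alpha> ^ i - real i / real k * ?\<alpha> ^ (i - 1)) * f ?U + ?\<alpha> ^ i * f {})
        + (1 / real k) * (f ?O + ?\<alpha> ^ i * f ?U - f ?U)"
    using alg1[of ?\<alpha> "real k" "real i" "?\<alpha> ^ (i - 1)" "?\<alpha> ^ i" "f ?O" "f ?U" "f {}"] kpos pow_pred[of ?\<alpha> i]
    by (simp add: add.commute)
  also have "\<dots> \<le> ?\<alpha> * ?E i f + (1 / real k) * ?E i (\<lambda>S. f (S \<union> ?O))"
    using IH C alpha_nonneg by (intro add_mono mult_left_mono) auto
  also have "\<dots> \<le> ?E (Suc i) f" by (rule G)
  finally show ?case .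
qed

lemma phase2:
  assumes OPT: "OPT \<subseteq> N" "card OPT \<le> k"
  shows "c + m \<le> k \<Longrightarrow> measure_pmf.expectation (grg sel (c + m)) f \<ge>
         real m / real k * (1 - 1 / real k) ^ (m - 1) * (f OPT - (1 - (1 - 1 / real k) ^ c) * f (OPT \<union> Z))"
proof (induction m)
  case 0
  have finA: "finite (set_pmf (grg sel c))" using fin_supp ck by simp
  have "measure_pmf.expectation (grg sel c) (\<lambda>_. 0) \<le> measure_pmf.expectation (grg sel c) f"
  proof (rule expectation_mono[OF finA])
    fix S assume "S \<in> set_pmf (grg sel c)"
    then have "S \<subseteq> N" using supp ck by blast
    then show "0 \<le> f S" using nonneg unfolding nonneg_on_def by blast
  qed
  then show ?case by simp
next
  case (Suc m)
  let ?\<alpha> = "1 - 1 / real k" and ?U = "OPT \<union> Z"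
  let ?E = "\<lambda>i g. measure_pmf.expectation (grg sel i) g"
  let ?X = "f OPT - (1 - ?\<alpha> ^ c) * f ?U"
  have ik: "Suc (c + m) \<le> k" using Suc.prems by simp
  have G: "?\<alpha> * ?E (c + m) f + (1 / real k) * ?E (c + m) (\<lambda>S. f (S \<union> OPT)) \<le> ?E (Suc (c + m)) f"
    using gain[OF ik OPT] by auto
  have C: "f OPT + ?\<alpha> ^ c * f ?U - f ?U \<le> ?E c (\<lambda>S. f (S \<union> OPT))"
  proof (rule compare)
    show "c \<le> k" "OPT \<subseteq> ?U" "?U \<subseteq> N" using ck OPT ZN by auto
    fix S assume "S \<in> set_pmf (grg sel c)"
    then have "S \<inter> Z = {}" using supp[of c S] ck by auto
    then show "S \<inter> (?U - OPT) = {}" by auto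
  qed
  have Dm: "?\<alpha> ^ m * ?E c (\<lambda>S. f (S \<union> OPT)) \<le> ?E (c + m) (\<lambda>S. f (S \<union> OPT))"
    using decay_iter[OF OPT(1), of c m] ik by simp
  have "?\<alpha> ^ m * ?X \<le> ?\<alpha> ^ m * ?E c (\<lambda>S. f (S \<union> OPT))"
    using C alpha_nonneg by (intro mult_left_mono) (auto simp: algebra_simps)
  with Dm have D2: "?\<alpha> ^ m * ?X \<le> ?E (c + m) (\<lambda>S. f (S \<union> OPT))" by linarith
  have IH: "real m / real k * ?\<alpha> ^ (m - 1) * ?X \<le> ?E (c + m) f" using Suc by simp
  have "real (Suc m) / real k * ?\<alpha> ^ (Suc m - 1) * ?X
      = ?\<alpha> * (real m / real k * ?\<alpha> ^ (m - 1) * ?X) + (1 / real k) * (?\<alpha> ^ m * ?X)"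
    using alg2[of ?\<alpha> "real m" "?\<alpha> ^ (m - 1)" "?\<alpha> ^ m" "real k" ?X] pow_pred[of ?\<alpha> m]
    by (simp add: add.commute)
  also have "\<dots> \<le> ?\<alpha> * ?E (c + m) f + (1 / real k) * ?E (c + m) (\<lambda>S. f (S \<union> OPT))"
    using IH D2 alpha_nonneg by (intro add_mono mult_left_mono) auto
  also have "\<dots> \<le> ?E (Suc (c + m)) f" by (rule G)
  finally show ?case by simp
qed

end

theorem mainTheorem5:
  fixes N Z :: "'a set" and f :: "'a set \<Rightarrow> real" and k :: nat and t_s :: real
    and OPT :: "'a set" and sel :: "nat \<Rightarrow> 'a set \<Rightarrow> 'a set"
  assumes "finite N"
    and "nonneg_on N f" and "submodular_on N f"
    and "0 < k"
    and "0 \<le> t_s" and "t_s \<le> 1"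
    and "Z \<subseteq> N"
    and "\<exists>D. D \<subseteq> N - Z \<and> card D \<ge> 2 * k \<and> (\<forall>d\<in>D. dummy_elem N f d)"
    and "OPT \<subseteq> N" and "card OPT \<le> k"
    and "\<forall>T. T \<subseteq> N \<and> card T \<le> k \<longrightarrow> f T \<le> f OPT"
    and "valid_grg_rule N f k (nat \<lceil>t_s * real k\<rceil>) Z sel"
  shows "let c = nat \<lceil>t_s * real k\<rceil>; \<alpha> = 1 - 1 / real k in
    (\<forall>i. 1 \<le> i \<and> i \<le> c \<longrightarrow>
       measure_pmf.expectation (grg sel i) f \<ge>
         (1 - \<alpha> ^ i) * f (OPT - Z)
         - (1 - \<alpha> ^ i - real i / real k * \<alpha> ^ (i - 1)) * f (OPT \<union> Z)
         + \<alpha> ^ i * f {}) \<and>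
    (\<forall>i. c + 1 \<le> i \<and> i \<le> k \<longrightarrow>
       measure_pmf.expectation (grg sel i) f \<ge>
         real (i - c) / real k * \<alpha> ^ (i - c - 1) * f OPT
         - real (i - c) / real k * (\<alpha> ^ (i - c - 1) - \<alpha> ^ (i - 1)) * f (OPT \<union> Z))"
proof -
  obtain D where D: "D \<subseteq> N - Z" "card D \<ge> 2 * k" "\<forall>d\<in>D. dummy_elem N f d" using assms(8) by blast
  define c where "c = nat \<lceil>t_s * real k\<rceil>"
  have tk: "t_s * real k \<le> real k" using assms(6) mult_right_mono[of t_s 1 "real k"] by simp
  then have "\<lceil>t_s * real k\<rceil> \<le> int k" using ceiling_le[of "t_s * real k" "int k"] by simp
  then have ck: "c \<le> k" unfolding c_def using tk by simp
  interpret g: grg_ctx N Z f k c sel D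
    using assms D ck unfolding c_def by unfold_locales auto
  let ?\<alpha> = "1 - 1 / real k"
  have P1: "\<forall>i. 1 \<le> i \<and> i \<le> c \<longrightarrow>
       measure_pmf.expectation (grg sel i) f \<ge>
         (1 - ?\<alpha> ^ i) * f (OPT - Z)
         - (1 - ?\<alpha> ^ i - real i / real k * ?\<alpha> ^ (i - 1)) * f (OPT \<union> Z)
         + ?\<alpha> ^ i * f {}"
    using g.phase1[OF assms(9,10)] by blast
  have P2: "\<forall>i. c + 1 \<le> i \<and> i \<le> k \<longrightarrow>
       measure_pmf.expectation (grg sel i) f \<ge>
         real (i - c) / real k * ?\<alpha> ^ (i - c - 1) * f OPT
         - real (i - c) / real k * (?\<alpha> ^ (i - c - 1) - ?\<alpha> ^ (i - 1)) * f (OPT \<union> Z)"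
  proof (intro allI impI)
    fix i assume i: "c + 1 \<le> i \<and> i \<le> k"
    define m where "m = i - c"
    have im: "i = c + m" "m \<ge> 1" using i unfolding m_def by auto
    have pw: "?\<alpha> ^ (m - 1) * ?\<alpha> ^ c = ?\<alpha> ^ (i - 1)"
      using im by (simp add: power_add[symmetric] add.commute)
    have "real (i - c) / real k * ?\<alpha> ^ (i - c - 1) * f OPT
         - real (i - c) / real k * (?\<alpha> ^ (i - c - 1) - ?\<alpha> ^ (i - 1)) * f (OPT \<union> Z)
        = real m / real k * ?\<alpha> ^ (m - 1) * (f OPT - (1 - ?\<alpha> ^ c) * f (OPT \<union> Z))"
      unfolding m_def[symmetric] pw[symmetric] by (simp add: algebra_simps add_divide_distrib)
    also have "\<dots> \<le> measure_pmf.expectation (grg sel i) f"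
      using g.phase2[OF assms(9,10), of m] im i by simp
    finally show "real (i - c) / real k * ?\<alpha> ^ (i - c - 1) * f OPT
         - real (i - c) / real k * (?\<alpha> ^ (i - c - 1) - ?\<alpha> ^ (i - 1)) * f (OPT \<union> Z)
       \<le> measure_pmf.expectation (grg sel i) f" .
  qed
  show ?thesis unfolding Let_def c_def[symmetric] using P1 P2 by blast
qed

end
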